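(* Let $\hat{A}\in\{0,1\}^{n\times n}$ be symmetric with exactly $m$ non-zero entries and no zero row, $d_i=\sum_j\hat{A}_{ij}$. Let $\overline{F}_1,\dots,\overline{F}_\gamma\in\mathbb{R}^{n\times n}$ be symmetric block matrices, where $\overline{F}_t$ is constant on each block $B\times B'$ with $B,B'$ parts of a partition $\mathcal{B}_t$ of $V=\{1,\dots,n\}$. Let $b$ be the greatest lower bound (common refinement) of $\mathcal{B}_1,\dots,\mathcal{B}_\gamma$, i.e. the partition whose parts are the nonempty intersections $P_1\cap\dots\cap P_\gamma$ with $P_t\in\mathcal{B}_t$, and let $|b|$ be its number of parts. Set $c_t=\sum_{a,b'}(\overline{F}_t)_{ab'}\hat{A}_{ab'}$ and $$L(\lambda_1,\dots,\lambda_n,\mu_1,\dots,\mu_\gamma)=\sum_{a,b'}\log\Bigl(1+\exp\bigl(\lambda_a+\textstyle\sum_{t=1}^\gamma\mu_t(\overline{F}_t)_{ab'}\bigr)\Bigr)-\sum_a d_a\lambda_a-\sum_{t=1}^\gamma c_t\mu_t .$$ Let $W$ be the subspace of parameter vectors with $\lambda_a=\lambda_{a'}$ whenever $a,a'$ lie in the same part of $b$ and $d_a=d_{a'}$. Then $\dim W\le\sqrt{2|b|m}+\gamma$, $\inf_W L=\inf L$, and every minimizer of $L$ on $W$ is a global minimizer of $L$.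
   Context: This is the MaxEnt Lagrange dual with one constraint per node degree (feature matrix with ones in row $a$, multiplier $\lambda_a$) and one global constraint per block-approximated feature matrix $\overline{F}_t$ (multiplier $\mu_t$). A partition $\mathcal{B}$ refines $\mathcal{B}'$ if each part of $\mathcal{B}$ is contained in a part of $\mathcal{B}'$; the greatest lower bound of a set of partitions is their coarsest common refinement. *)

theory Defs
  imports "HOL-Analysis.Analysis" "HOL-Library.Disjoint_Sets" "HOL-Library.Function_Algebras"
begin

text \<open>Vertices are 0..n-1. A parameter vector of the dual is encoded as x :: nat => real,
  with lambda_a = x a (a < n), mu_t = x (n + t) (t < gamma), and x i = 0 for i >= n + gamma.\<close>

definition param_space :: "nat \<Rightarrow> nat \<Rightarrow> (nat \<Rightarrow> real) set" where
  "param_space n \<gamma> = {x. \<forall>i\<ge>n + \<gamma>. x i = 0}"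

definition pscale :: "real \<Rightarrow> (nat \<Rightarrow> real) \<Rightarrow> (nat \<Rightarrow> real)" where
  "pscale r x = (\<lambda>i. r * x i)"

definition pdim :: "(nat \<Rightarrow> real) set \<Rightarrow> nat" where
  "pdim W = vector_space.dim pscale W"

definition meet_partition :: "nat \<Rightarrow> nat \<Rightarrow> (nat \<Rightarrow> nat set set) \<Rightarrow> nat set set" where
  "meet_partition n \<gamma> Bs =
     {X. X \<noteq> {} \<and> (\<exists>P. (\<forall>t<\<gamma>. P t \<in> Bs t) \<and> X = {..<n} \<inter> (\<Inter>t\<in>{..<\<gamma>}. P t))}"

definition block_constant :: "nat set set \<Rightarrow> (nat \<Rightarrow> nat \<Rightarrow> real) \<Rightarrow> bool" where
  "block_constant Bt M \<longleftrightarrow>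
     (\<forall>B\<in>Bt. \<forall>B'\<in>Bt. \<forall>a\<in>B. \<forall>a'\<in>B. \<forall>c\<in>B'. \<forall>c'\<in>B'. M a c = M a' c')"

definition degree :: "nat \<Rightarrow> (nat \<Rightarrow> nat \<Rightarrow> real) \<Rightarrow> nat \<Rightarrow> real" where
  "degree n A i = (\<Sum>j<n. A i j)"

definition nnz :: "nat \<Rightarrow> (nat \<Rightarrow> nat \<Rightarrow> real) \<Rightarrow> nat" where
  "nnz n A = card {(i, j). i < n \<and> j < n \<and> A i j \<noteq> 0}"

definition dualL :: "nat \<Rightarrow> nat \<Rightarrow> (nat \<Rightarrow> nat \<Rightarrow> real) \<Rightarrow> (nat \<Rightarrow> nat \<Rightarrow> nat \<Rightarrow> real)
                      \<Rightarrow> (nat \<Rightarrow> real) \<Rightarrow> real" where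
  "dualL n \<gamma> A F x =
     (\<Sum>a<n. \<Sum>b<n. ln (1 + exp (x a + (\<Sum>t<\<gamma>. x (n + t) * F t a b))))
     - (\<Sum>a<n. degree n A a * x a)
     - (\<Sum>t<\<gamma>. (\<Sum>a<n. \<Sum>b<n. F t a b * A a b) * x (n + t))"

definition Wsub :: "nat \<Rightarrow> nat \<Rightarrow> (nat \<Rightarrow> nat \<Rightarrow> real) \<Rightarrow> nat set set \<Rightarrow> (nat \<Rightarrow> real) set" where
  "Wsub n \<gamma> A b = {x \<in> param_space n \<gamma>.
      \<forall>a<n. \<forall>a'<n. (\<exists>X\<in>b. a \<in> X \<and> a' \<in> X) \<and> degree n A a = degree n A a' \<longrightarrow> x a = x a'}"

end

theory Submission
  imports Defs
begin

lemma softplus_deriv: "((\<lambda>s. ln (1 + exp s)) has_real_derivative (exp s / (1 + exp s))) (at s)"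
  by (auto intro!: derivative_eq_intros simp: add_pos_pos)

lemma softplus_convex: "convex_on UNIV (\<lambda>s::real. ln (1 + exp s))"
proof (rule convex_on_realI[OF _ softplus_deriv])
  show "connected (UNIV::real set)" by simp
  fix x y :: real assume "x \<le> y"
  have e: "exp s / (1 + exp s) = 1 - 1 / (1 + exp s)" for s :: real
  proof -
    have "1 + exp s > 0" by (simp add: add_pos_pos)
    then show ?thesis by (simp add: field_simps)
  qed
  have "1 / (1 + exp y) \<le> 1 / (1 + exp x)"
    using \<open>x \<le> y\<close> by (intro divide_left_mono) (auto simp: add_pos_pos)
  then show "exp x / (1 + exp x) \<le> exp y / (1 + exp y)" unfolding e by simp
qed

lemma softplus_jensen:
  fixes C :: "'a set" and y :: "'a \<Rightarrow> real"
  assumes "finite C" "C \<noteq> {}"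
  shows "card C * ln (1 + exp ((\<Sum>i\<in>C. y i) / card C + c)) \<le> (\<Sum>i\<in>C. ln (1 + exp (y i + c)))"
proof -
  have cpos: "real (card C) > 0" using assms by (simp add: card_gt_0_iff)
  have "ln (1 + exp (\<Sum>i\<in>C. (1 / card C) *\<^sub>R (y i + c))) \<le> (\<Sum>i\<in>C. (1/card C) * ln (1 + exp (y i + c)))"
    using assms by (intro convex_on_sum[OF _ _ softplus_convex]) auto
  moreover have "(\<Sum>i\<in>C. (1 / card C) *\<^sub>R (y i + c)) = (\<Sum>i\<in>C. y i) / card C + c"
    using cpos by (simp add: add_divide_distrib sum.distrib sum_divide_distrib)
  ultimately have "ln (1 + exp ((\<Sum>i\<in>C. y i) / card C + c)) \<le> (1/card C) * (\<Sum>i\<in>C. ln (1 + exp (y i + c)))"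
    by (simp add: sum_distrib_left)
  then show ?thesis using cpos by (simp add: field_simps)
qed

definition dn :: "nat \<Rightarrow> (nat \<Rightarrow> nat \<Rightarrow> real) \<Rightarrow> nat \<Rightarrow> nat" where
  "dn n A a = card {j. j < n \<and> A a j \<noteq> 0}"

lemma degree_dn:
  assumes "\<forall>j<n. A a j = 0 \<or> A a j = 1"
  shows "degree n A a = real (dn n A a)"
proof -
  have "degree n A a = (\<Sum>j\<in>{..<n}. if A a j \<noteq> 0 then 1 else 0)"
    unfolding degree_def using assms by (intro sum.cong) auto
  also have "\<dots> = real (card ({..<n} \<inter> {j. A a j \<noteq> 0}))"
    by (simp add: sum.If_cases)
  also have "{..<n} \<inter> {j. A a j \<noteq> 0} = {j. j < n \<and> A a j \<noteq> 0}" by auto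
  finally show ?thesis unfolding dn_def .
qed

lemma nnz_dn: "nnz n A = (\<Sum>a<n. dn n A a)"
proof -
  have "{(i, j). i < n \<and> j < n \<and> A i j \<noteq> 0} = Sigma {..<n} (\<lambda>i. {j. j < n \<and> A i j \<noteq> 0})"
    by auto
  then show ?thesis unfolding nnz_def dn_def by (simp add: card_SigmaI)
qed

locale mp =
  fixes n \<gamma> :: nat and Bs :: "nat \<Rightarrow> nat set set"
  assumes Bs_part: "\<forall>t<\<gamma>. partition_on {..<n} (Bs t)"
begin

abbreviation "b \<equiv> meet_partition n \<gamma> Bs"

lemma b_sub: "X \<in> b \<Longrightarrow> X \<subseteq> {..<n}"
  unfolding meet_partition_def by auto

lemma b_ne: "X \<in> b \<Longrightarrow> X \<noteq> {}"
  unfolding meet_partition_def by auto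

lemma b_fin: "finite b"
  by (rule finite_subset[of _ "Pow {..<n}"]) (auto dest: b_sub)

lemma b_cover: assumes "a < n" shows "\<exists>X\<in>b. a \<in> X"
proof -
  define P where "P t = (SOME B. B \<in> Bs t \<and> a \<in> B)" for t
  have P: "P t \<in> Bs t \<and> a \<in> P t" if "t < \<gamma>" for t
  proof -
    have "\<exists>B. B \<in> Bs t \<and> a \<in> B"
      using partition_onD1[of "{..<n}" "Bs t"] Bs_part that assms by auto
    then show ?thesis unfolding P_def by (rule someI_ex)
  qed
  let ?X = "{..<n} \<inter> (\<Inter>t\<in>{..<\<gamma>}. P t)"
  have "a \<in> ?X" using P assms by auto
  moreover have "?X \<in> b" unfolding meet_partition_def mem_Collect_eq
  proof (intro conjI exI)
    show "?X \<noteq> {}" using \<open>a \<in> ?X\<close> by auto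
    show "\<forall>t<\<gamma>. P t \<in> Bs t" using P by auto
  qed simp
  ultimately show ?thesis by (rule bexI)
qed

lemma b_disj: assumes "X \<in> b" "Y \<in> b" "a \<in> X" "a \<in> Y" shows "X = Y"
proof -
  obtain P where P: "\<forall>t<\<gamma>. P t \<in> Bs t" "X = {..<n} \<inter> (\<Inter>t\<in>{..<\<gamma>}. P t)"
    using assms(1) unfolding meet_partition_def by blast
  obtain Q where Q: "\<forall>t<\<gamma>. Q t \<in> Bs t" "Y = {..<n} \<inter> (\<Inter>t\<in>{..<\<gamma>}. Q t)"
    using assms(2) unfolding meet_partition_def by blast
  have "P t = Q t" if "t < \<gamma>" for t
  proof (rule ccontr)
    assume "P t \<noteq> Q t"
    then have "P t \<inter> Q t = {}"
      using disjointD[OF partition_onD2[OF Bs_part[rule_format, OF that]]] P Q that by blast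
    moreover have "a \<in> P t" "a \<in> Q t" using assms P Q that by auto
    ultimately show False by blast
  qed
  then have e: "P ` {..<\<gamma>} = Q ` {..<\<gamma>}" by (intro image_cong) auto
  show ?thesis unfolding P(2) Q(2) e ..
qed

lemma b_F:
  assumes "X \<in> b" "a \<in> X" "a' \<in> X" "t < \<gamma>" "c < n" "block_constant (Bs t) M"
  shows "M a c = M a' c"
proof -
  obtain P where P: "\<forall>t<\<gamma>. P t \<in> Bs t" "X = {..<n} \<inter> (\<Inter>t\<in>{..<\<gamma>}. P t)"
    using assms(1) unfolding meet_partition_def by blast
  obtain B' where "B' \<in> Bs t" "c \<in> B'"
    using partition_onD1[of "{..<n}" "Bs t"] Bs_part assms by auto
  have H: "\<And>B B' a a' c c'. B\<in>Bs t \<Longrightarrow> B'\<in>Bs t \<Longrightarrow> a\<in>B \<Longrightarrow> a'\<in>B \<Longrightarrow> c\<in>B' \<Longrightarrow> c'\<in>B' \<Longrightarrow> M a c = M a' c'"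
    using assms(6) unfolding block_constant_def by blast
  have 1: "P t \<in> Bs t" "a \<in> P t" "a' \<in> P t" using P assms by auto
  show ?thesis by (rule H[OF 1(1) \<open>B' \<in> Bs t\<close> 1(2) 1(3) \<open>c \<in> B'\<close> \<open>c \<in> B'\<close>])
qed

end

locale mm = mp +
  fixes A :: "nat \<Rightarrow> nat \<Rightarrow> real" and F :: "nat \<Rightarrow> nat \<Rightarrow> nat \<Rightarrow> real"
  assumes A01: "\<forall>i<n. \<forall>j<n. A i j = 0 \<or> A i j = 1"
    and F_block: "\<forall>t<\<gamma>. block_constant (Bs t) (F t)"
begin

definition rel :: "nat \<Rightarrow> nat \<Rightarrow> bool" where
  "rel a a' \<longleftrightarrow> a < n \<and> a' < n \<and> (\<exists>X\<in>b. a \<in> X \<and> a' \<in> X) \<and> dn n A a = dn n A a'"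

definition cl :: "nat \<Rightarrow> nat set" where "cl a = {a'. rel a a'}"

lemma rel_sym: "rel a a' \<Longrightarrow> rel a' a" unfolding rel_def by auto

lemma rel_trans: assumes "rel a a'" "rel a' a''" shows "rel a a''"
proof -
  obtain X where X: "X \<in> b" "a \<in> X" "a' \<in> X" using assms(1) unfolding rel_def by auto
  obtain Y where Y: "Y \<in> b" "a' \<in> Y" "a'' \<in> Y" using assms(2) unfolding rel_def by auto
  have "X = Y" using b_disj[OF X(1) Y(1) X(3) Y(2)] .
  then show ?thesis using assms X Y unfolding rel_def by auto
qed

lemma rel_refl: "a < n \<Longrightarrow> rel a a"
  using b_cover unfolding rel_def by auto

lemma cl_sub: "cl a \<subseteq> {..<n}" unfolding cl_def rel_def by auto
lemma cl_fin: "finite (cl a)" using cl_sub finite_subset by blast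
lemma cl_mem: "a < n \<Longrightarrow> a \<in> cl a" using rel_refl unfolding cl_def by auto
lemma cl_pos: "a < n \<Longrightarrow> real (card (cl a)) > 0"
  using cl_mem cl_fin by (auto simp: card_gt_0_iff)
lemma cl_eq: "a' \<in> cl a \<Longrightarrow> cl a' = cl a"
  unfolding cl_def using rel_trans rel_sym by blast

lemma swap:
  fixes H :: "nat \<Rightarrow> real"
  shows "(\<Sum>a<n. \<Sum>a'\<in>cl a. H a') = (\<Sum>a'<n. real (card (cl a')) * H a')"
proof -
  have c: "cl a = {a'\<in>{..<n}. rel a a'}" for a unfolding cl_def rel_def by auto
  have "(\<Sum>a<n. \<Sum>a'\<in>cl a. H a') = (\<Sum>a<n. \<Sum>a'<n. if rel a a' then H a' else 0)"
    unfolding c sum.inter_filter[OF finite_lessThan] ..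
  also have "\<dots> = (\<Sum>a'<n. \<Sum>a<n. if rel a a' then H a' else 0)" by (rule sum.swap)
  also have "\<dots> = (\<Sum>a'<n. \<Sum>a<n. if rel a' a then H a' else 0)"
    using rel_sym by (intro sum.cong refl) (metis (full_types))
  also have "\<dots> = (\<Sum>a'<n. \<Sum>a\<in>cl a'. H a')"
    unfolding c sum.inter_filter[OF finite_lessThan] ..
  also have "\<dots> = (\<Sum>a'<n. real (card (cl a')) * H a')" by simp
  finally show ?thesis .
qed

lemma swap_avg:
  fixes G :: "nat \<Rightarrow> real"
  shows "(\<Sum>a<n. \<Sum>a'\<in>cl a. G a' / card (cl a')) = (\<Sum>a'<n. G a')"
  unfolding swap using cl_pos by (intro sum.cong refl) (simp add: less_imp_neq[symmetric])

definition xbar :: "(nat \<Rightarrow> real) \<Rightarrow> nat \<Rightarrow> real" where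
  "xbar x i = (if i < n then (\<Sum>a'\<in>cl i. x a') / card (cl i) else x i)"

lemma rel_F: "rel a a' \<Longrightarrow> t < \<gamma> \<Longrightarrow> c < n \<Longrightarrow> F t a c = F t a' c"
  unfolding rel_def using b_F F_block by blast

lemma xbar_W: assumes "x \<in> param_space n \<gamma>" shows "xbar x \<in> Wsub n \<gamma> A b"
  unfolding Wsub_def mem_Collect_eq
proof (intro conjI allI impI)
  show "xbar x \<in> param_space n \<gamma>" using assms unfolding param_space_def xbar_def by auto
  fix a a' assume h: "a < n" "a' < n" "(\<exists>X\<in>b. a \<in> X \<and> a' \<in> X) \<and> degree n A a = degree n A a'"
  then have "dn n A a = dn n A a'" using degree_dn A01 by simp
  then have "rel a' a" using h unfolding rel_def by auto
  then have "cl a = cl a'" using cl_eq unfolding cl_def by auto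
  then show "xbar x a = xbar x a'" using h unfolding xbar_def by simp
qed

end

context mm begin

definition cc :: "(nat \<Rightarrow> real) \<Rightarrow> nat \<Rightarrow> nat \<Rightarrow> real" where
  "cc x a bb = (\<Sum>t<\<gamma>. x (n + t) * F t a bb)"

lemma cc_rel: "a' \<in> cl a \<Longrightarrow> bb < n \<Longrightarrow> cc x a' bb = cc x a bb"
  unfolding cc_def cl_def using rel_F by (intro sum.cong refl) (auto)

lemma cl_in: "a' \<in> cl a \<Longrightarrow> a < n \<and> a' < n \<and> dn n A a' = dn n A a"
  unfolding cl_def rel_def by auto

lemma xbar_mu: "xbar x (n + t) = x (n + t)" unfolding xbar_def by simp

lemma cc_xbar: "cc (xbar x) = cc x" unfolding cc_def xbar_mu by (intro ext) simp

lemma lin_eq: "(\<Sum>a<n. degree n A a * xbar x a) = (\<Sum>a<n. degree n A a * x a)"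
proof -
  have "degree n A a * xbar x a = (\<Sum>a'\<in>cl a. degree n A a' * x a' / card (cl a'))" if "a < n" for a
  proof -
    have "(\<Sum>a'\<in>cl a. degree n A a' * x a' / card (cl a')) = (\<Sum>a'\<in>cl a. degree n A a * x a' / card (cl a))"
    proof (intro sum.cong refl)
      fix a' assume "a' \<in> cl a"
      then show "degree n A a' * x a' / card (cl a') = degree n A a * x a' / card (cl a)"
        using cl_in cl_eq degree_dn A01 by metis
    qed
    also have "\<dots> = degree n A a * xbar x a"
      using that unfolding xbar_def by (simp add: sum_distrib_left sum_divide_distrib)
    finally show ?thesis by simp
  qed
  then have "(\<Sum>a<n. degree n A a * xbar x a) = (\<Sum>a<n. \<Sum>a'\<in>cl a. degree n A a' * x a' / card (cl a'))"
    by (intro sum.cong refl) simp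
  also have "\<dots> = (\<Sum>a<n. degree n A a * x a)" by (rule swap_avg)
  finally show ?thesis .
qed

abbreviation "sp s \<equiv> ln (1 + exp (s::real))"

lemma sp_le: "(\<Sum>a<n. \<Sum>bb<n. sp (xbar x a + cc x a bb)) \<le> (\<Sum>a<n. \<Sum>bb<n. sp (x a + cc x a bb))"
proof -
  have pt: "sp (xbar x a + cc x a bb) \<le> (\<Sum>a'\<in>cl a. sp (x a' + cc x a' bb) / card (cl a'))"
    if "a < n" "bb < n" for a bb
  proof -
    have ne: "cl a \<noteq> {}" using cl_mem that by auto
    have "card (cl a) * sp ((\<Sum>i\<in>cl a. x i) / card (cl a) + cc x a bb) \<le> (\<Sum>i\<in>cl a. sp (x i + cc x a bb))"
      by (rule softplus_jensen[OF cl_fin ne])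
    also have "\<dots> = (\<Sum>i\<in>cl a. sp (x i + cc x i bb))"
      using cc_rel that by (intro sum.cong refl) simp
    finally have "sp (xbar x a + cc x a bb) \<le> (\<Sum>i\<in>cl a. sp (x i + cc x i bb)) / card (cl a)"
      using cl_pos[OF that(1)] that unfolding xbar_def by (simp add: field_simps)
    also have "\<dots> = (\<Sum>i\<in>cl a. sp (x i + cc x i bb) / card (cl i))"
      unfolding sum_divide_distrib using cl_eq by (intro sum.cong refl) simp
    finally show ?thesis .
  qed
  have "(\<Sum>a<n. \<Sum>bb<n. sp (xbar x a + cc x a bb)) \<le> (\<Sum>a<n. \<Sum>bb<n. \<Sum>a'\<in>cl a. sp (x a' + cc x a' bb) / card (cl a'))"
    using pt by (intro sum_mono) auto
  also have "\<dots> = (\<Sum>a<n. \<Sum>a'\<in>cl a. (\<Sum>bb<n. sp (x a' + cc x a' bb)) / card (cl a'))"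
    by (rule sum.cong[OF refl]) (subst sum.swap, simp add: sum_divide_distrib)
  also have "\<dots> = (\<Sum>a<n. \<Sum>bb<n. sp (x a + cc x a bb))" by (rule swap_avg)
  finally show ?thesis .
qed

lemma dual_le: "dualL n \<gamma> A F (xbar x) \<le> dualL n \<gamma> A F x"
proof -
  have e: "dualL n \<gamma> A F y = (\<Sum>a<n. \<Sum>bb<n. sp (y a + cc y a bb))
     - (\<Sum>a<n. degree n A a * y a) - (\<Sum>t<\<gamma>. (\<Sum>a<n. \<Sum>b<n. F t a b * A a b) * y (n + t))" for y
    unfolding dualL_def cc_def ..
  show ?thesis unfolding e lin_eq xbar_mu using sp_le[of x] unfolding cc_xbar by simp
qed

end

lemma sum_fun_app: "(sum f A) i = (\<Sum>a\<in>A. f a i)" for f :: "'b \<Rightarrow> nat \<Rightarrow> real"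
  by (induct A rule: infinite_finite_induct) auto

lemma vs_pscale: "vector_space pscale"
  by unfold_locales (auto simp: pscale_def algebra_simps)

lemma distinct_pos_sum:
  fixes S :: "nat set"
  assumes "finite S" "0 \<notin> S"
  shows "card S * (card S + 1) \<le> 2 * \<Sum>S"
  using assms
proof (induct "card S" arbitrary: S)
  case 0 then show ?case by simp
next
  case (Suc k)
  then have ne: "S \<noteq> {}" by auto
  define m where "m = Max S"
  have mS: "m \<in> S" using Suc ne unfolding m_def by simp
  have "S \<subseteq> {1..m}" using Suc(3,4) unfolding m_def by (auto simp: Suc_le_eq intro: Nat.gr0I)
  then have cm: "card S \<le> m" using card_mono[of "{1..m}" S] by simp
  have cS': "card (S - {m}) = k" using Suc mS by simp
  have IH: "card (S - {m}) * (card (S - {m}) + 1) \<le> 2 * \<Sum>(S - {m})"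
    using Suc(1)[of "S - {m}"] cS' Suc(3,4) by auto
  have "\<Sum>S = m + \<Sum>(S - {m})" using Suc(3) mS by (simp add: sum.remove)
  then show ?case using IH cS' cm Suc(2)[symmetric] by (simp add: algebra_simps)
qed

context mm begin

abbreviation "d \<equiv> dn n A"

definition PP :: "(nat set \<times> nat) set" where "PP = Sigma b (\<lambda>X. d ` X)"
definition ind :: "nat set \<times> nat \<Rightarrow> nat \<Rightarrow> real" where
  "ind p = (\<lambda>i. if i \<in> fst p \<and> d i = snd p then 1 else 0)"
definition ee :: "nat \<Rightarrow> nat \<Rightarrow> real" where "ee t = (\<lambda>i. if i = n + t then 1 else 0)"
definition rep :: "nat set \<times> nat \<Rightarrow> nat" where "rep p = (SOME a. a \<in> fst p \<and> d a = snd p)"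

lemma PP_fin: "finite PP"
  unfolding PP_def using b_fin b_sub by (intro finite_SigmaI) (auto intro: finite_subset)

lemma W_span:
  assumes "x \<in> Wsub n \<gamma> A b"
  shows "x = (\<Sum>p\<in>PP. pscale (x (rep p)) (ind p)) + (\<Sum>t<\<gamma>. pscale (x (n + t)) (ee t))"
proof
  fix i
  have xp: "x \<in> param_space n \<gamma>" and xW: "\<And>a a'. a<n \<Longrightarrow> a'<n \<Longrightarrow> (\<exists>X\<in>b. a \<in> X \<and> a' \<in> X) \<Longrightarrow> degree n A a = degree n A a' \<Longrightarrow> x a = x a'"
    using assms unfolding Wsub_def by blast+
  have R: "((\<Sum>p\<in>PP. pscale (x (rep p)) (ind p)) + (\<Sum>t<\<gamma>. pscale (x (n + t)) (ee t))) i
     = (\<Sum>p\<in>PP. x (rep p) * ind p i) + (\<Sum>t<\<gamma>. x (n + t) * ee t i)"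
    by (simp add: sum_fun_app pscale_def)
  show "x i = ((\<Sum>p\<in>PP. pscale (x (rep p)) (ind p)) + (\<Sum>t<\<gamma>. pscale (x (n + t)) (ee t))) i"
  proof (cases "i < n")
    case True
    obtain X where X: "X \<in> b" "i \<in> X" using b_cover[OF True] by blast
    have s2: "(\<Sum>t<\<gamma>. x (n + t) * ee t i) = 0" using True by (intro sum.neutral) (auto simp: ee_def)
    have "(\<Sum>p\<in>PP. x (rep p) * ind p i) = (\<Sum>p\<in>PP. if p = (X, d i) then x (rep p) else 0)"
    proof (rule sum.cong[OF refl])
      fix p assume "p \<in> PP"
      then obtain Y k where p: "p = (Y, k)" "Y \<in> b" unfolding PP_def by (cases p) blast
      have "i \<in> Y \<Longrightarrow> Y = X" using b_disj[OF p(2) X(1) _ X(2)] by blast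
      then have eq: "(i \<in> Y \<and> d i = k) = ((Y, k) = (X, d i))" using X(2) by blast
      show "x (rep p) * ind p i = (if p = (X, d i) then x (rep p) else 0)"
        unfolding ind_def p fst_conv snd_conv eq by simp
    qed
    also have "\<dots> = x (rep (X, d i))"
      using PP_fin X unfolding PP_def by (simp add: sum.delta')
    also have "\<dots> = x i"
    proof -
      have "\<exists>a. a \<in> fst (X, d i) \<and> d a = snd (X, d i)" using X by auto
      then have r: "rep (X, d i) \<in> X" "d (rep (X, d i)) = d i" unfolding rep_def
        by (metis (mono_tags, lifting) fst_conv snd_conv someI_ex)+
      have "rep (X, d i) < n" using r b_sub X by auto
      moreover have "degree n A (rep (X, d i)) = degree n A i"
        using \<open>rep (X, d i) < n\<close> True r(2) degree_dn A01 by simp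
      moreover have "\<exists>Y\<in>b. rep (X, d i) \<in> Y \<and> i \<in> Y" using r X by blast
      ultimately show ?thesis using xW True by blast
    qed
    finally show ?thesis using R s2 by simp
  next
    case False
    have s1: "(\<Sum>p\<in>PP. x (rep p) * ind p i) = 0"
      using False b_sub unfolding PP_def ind_def by (intro sum.neutral) auto
    have "(\<Sum>t<\<gamma>. x (n + t) * ee t i) = x i"
    proof (cases "i < n + \<gamma>")
      case True
      then have "(\<Sum>t<\<gamma>. x (n + t) * ee t i) = (\<Sum>t<\<gamma>. if t = i - n then x (n + t) else 0)"
        using False unfolding ee_def by (intro sum.cong refl) auto
      also have "\<dots> = x i" using True False by (simp add: sum.delta')
      finally show ?thesis .
    next
      case F2: False
      then have "x i = 0" using xp unfolding param_space_def by auto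
      moreover have "(\<Sum>t<\<gamma>. x (n + t) * ee t i) = 0"
        using F2 by (intro sum.neutral) (auto simp: ee_def)
      ultimately show ?thesis by simp
    qed
    then show ?thesis using R s1 by simp
  qed
qed

end

context mm begin

lemma d_pos:
  assumes nz: "\<forall>i<n. \<exists>j<n. A i j \<noteq> 0" and "a < n"
  shows "d a > 0"
proof -
  obtain j where "j < n" "A a j \<noteq> 0" using nz assms(2) by blast
  then have "{j. j < n \<and> A a j \<noteq> 0} \<noteq> {}" by blast
  moreover have "finite {j. j < n \<and> A a j \<noteq> 0}" by simp
  ultimately show ?thesis unfolding dn_def by (simp add: card_gt_0_iff)
qed

lemma card_PP: "card PP = (\<Sum>X\<in>b. card (d ` X))"
  unfolding PP_def using b_fin b_sub by (intro card_SigmaI) (auto intro: finite_subset)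

lemma sq_bound:
  assumes nz: "\<forall>i<n. \<exists>j<n. A i j \<noteq> 0"
  shows "(\<Sum>X\<in>b. (card (d ` X))\<^sup>2) \<le> 2 * nnz n A"
proof -
  have fX: "finite X" if "X \<in> b" for X using b_sub[OF that] finite_subset by blast
  have "(card (d ` X))\<^sup>2 \<le> 2 * (\<Sum>a\<in>X. d a)" if X: "X \<in> b" for X
  proof -
    have "0 \<notin> d ` X" using d_pos[OF nz] b_sub[OF X] by fastforce
    then have "card (d ` X) * (card (d ` X) + 1) \<le> 2 * \<Sum>(d ` X)"
      using fX[OF X] by (intro distinct_pos_sum) auto
    moreover have "\<Sum>(d ` X) \<le> (\<Sum>a\<in>X. d a)"
      using sum_image_le[of X "\<lambda>x. x" d] fX[OF X] by (simp add: o_def)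
    ultimately show ?thesis by (simp add: power2_eq_square algebra_simps)
  qed
  then have "(\<Sum>X\<in>b. (card (d ` X))\<^sup>2) \<le> (\<Sum>X\<in>b. 2 * (\<Sum>a\<in>X. d a))"
    by (intro sum_mono) auto
  also have "\<dots> = 2 * (\<Sum>X\<in>b. \<Sum>a\<in>X. d a)" by (simp add: sum_distrib_left)
  also have "(\<Sum>X\<in>b. \<Sum>a\<in>X. d a) = (\<Sum>a\<in>\<Union>b. d a)"
  proof -
    have "sum d (\<Union>b) = (sum \<circ> sum) d b"
      using fX b_disj by (intro sum.Union_disjoint) blast+
    then show ?thesis by simp
  qed
  also have "\<Union>b = {..<n}" using b_sub b_cover by blast
  finally show ?thesis by (simp add: nnz_dn)
qed

lemma dim_bound:
  assumes nz: "\<forall>i<n. \<exists>j<n. A i j \<noteq> 0"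
  shows "real (pdim (Wsub n \<gamma> A b)) \<le> sqrt (2 * real (card b) * real (nnz n A)) + real \<gamma>"
proof -
  interpret V: vector_space pscale by (rule vs_pscale)
  define S where "S = ind ` PP \<union> ee ` {..<\<gamma>}"
  have fS: "finite S" unfolding S_def using PP_fin by simp
  have "Wsub n \<gamma> A b \<subseteq> V.span S"
  proof
    fix x assume x: "x \<in> Wsub n \<gamma> A b"
    have "(\<Sum>p\<in>PP. pscale (x (rep p)) (ind p)) + (\<Sum>t<\<gamma>. pscale (x (n + t)) (ee t)) \<in> V.span S"
      unfolding S_def by (intro V.span_add V.span_sum V.span_scale V.span_base) auto
    then show "x \<in> V.span S" using W_span[OF x] by simp
  qed
  then have "pdim (Wsub n \<gamma> A b) \<le> card S" unfolding pdim_def using V.dim_le_card fS by blast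
  also have "card S \<le> card (ind ` PP) + card (ee ` {..<\<gamma>})" unfolding S_def by (rule card_Un_le)
  also have "\<dots> \<le> card PP + \<gamma>"
    using card_image_le[OF PP_fin, of ind] card_image_le[of "{..<\<gamma>}" ee] by simp
  finally have 1: "real (pdim (Wsub n \<gamma> A b)) \<le> real (card PP) + real \<gamma>" by simp
  have "(real (card PP))\<^sup>2 = (\<Sum>X\<in>b. real (card (d ` X)) * 1)\<^sup>2" unfolding card_PP by simp
  also have "\<dots> \<le> (\<Sum>X\<in>b. (real (card (d ` X)))\<^sup>2) * (\<Sum>X\<in>b. 1\<^sup>2)"
    by (rule Cauchy_Schwarz_ineq_sum)
  also have "\<dots> = real (\<Sum>X\<in>b. (card (d ` X))\<^sup>2) * real (card b)" by simp
  also have "\<dots> \<le> real (2 * nnz n A) * real (card b)"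
  proof -
    have h: "real (\<Sum>X\<in>b. (card (d ` X))\<^sup>2) \<le> real (2 * nnz n A)"
      using sq_bound[OF nz] by (simp only: of_nat_le_iff)
    show ?thesis by (intro mult_right_mono h) simp
  qed
  finally have "real (card PP) \<le> sqrt (2 * real (card b) * real (nnz n A))"
    by (intro real_le_rsqrt) (simp add: algebra_simps)
  with 1 show ?thesis by simp
qed

end

theorem mainTheorem3:
  fixes n \<gamma> :: nat
    and A :: "nat \<Rightarrow> nat \<Rightarrow> real"
    and F :: "nat \<Rightarrow> nat \<Rightarrow> nat \<Rightarrow> real"
    and Bs :: "nat \<Rightarrow> nat set set"
  assumes A01: "\<forall>i<n. \<forall>j<n. A i j = 0 \<or> A i j = 1"
    and A_sym: "\<forall>i<n. \<forall>j<n. A i j = A j i"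
    and A_nozero_row: "\<forall>i<n. \<exists>j<n. A i j \<noteq> 0"
    and F_sym: "\<forall>t<\<gamma>. \<forall>a<n. \<forall>c<n. F t a c = F t c a"
    and Bs_part: "\<forall>t<\<gamma>. partition_on {..<n} (Bs t)"
    and F_block: "\<forall>t<\<gamma>. block_constant (Bs t) (F t)"
  shows "(real (pdim (Wsub n \<gamma> A (meet_partition n \<gamma> Bs)))
           \<le> sqrt (2 * real (card (meet_partition n \<gamma> Bs)) * real (nnz n A)) + real \<gamma>)
       \<and> ((INF x\<in>Wsub n \<gamma> A (meet_partition n \<gamma> Bs). ereal (dualL n \<gamma> A F x))
           = (INF x\<in>param_space n \<gamma>. ereal (dualL n \<gamma> A F x)))
       \<and> (\<forall>x\<in>Wsub n \<gamma> A (meet_partition n \<gamma> Bs).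
           (\<forall>y\<in>Wsub n \<gamma> A (meet_partition n \<gamma> Bs). dualL n \<gamma> A F x \<le> dualL n \<gamma> A F y)
           \<longrightarrow> (\<forall>y\<in>param_space n \<gamma>. dualL n \<gamma> A F x \<le> dualL n \<gamma> A F y))"
proof -
  interpret mm n \<gamma> Bs A F
    using A01 Bs_part F_block by unfold_locales auto
  have sub: "Wsub n \<gamma> A (meet_partition n \<gamma> Bs) \<subseteq> param_space n \<gamma>"
    unfolding Wsub_def by auto
  have inf: "(INF x\<in>Wsub n \<gamma> A (meet_partition n \<gamma> Bs). ereal (dualL n \<gamma> A F x))
           = (INF x\<in>param_space n \<gamma>. ereal (dualL n \<gamma> A F x))"
  proof (rule antisym)
    show "(INF x\<in>Wsub n \<gamma> A (meet_partition n \<gamma> Bs). ereal (dualL n \<gamma> A F x))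
           \<le> (INF x\<in>param_space n \<gamma>. ereal (dualL n \<gamma> A F x))"
    proof (rule INF_mono)
      fix m assume "m \<in> param_space n \<gamma>"
      then show "\<exists>x\<in>Wsub n \<gamma> A (meet_partition n \<gamma> Bs). ereal (dualL n \<gamma> A F x) \<le> ereal (dualL n \<gamma> A F m)"
        using xbar_W dual_le by auto
    qed
    show "(INF x\<in>param_space n \<gamma>. ereal (dualL n \<gamma> A F x))
           \<le> (INF x\<in>Wsub n \<gamma> A (meet_partition n \<gamma> Bs). ereal (dualL n \<gamma> A F x))"
      by (rule INF_superset_mono[OF sub]) simp
  qed
  have min: "\<forall>x\<in>Wsub n \<gamma> A (meet_partition n \<gamma> Bs).
           (\<forall>y\<in>Wsub n \<gamma> A (meet_partition n \<gamma> Bs). dualL n \<gamma> A F x \<le> dualL n \<gamma> A F y)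
           \<longrightarrow> (\<forall>y\<in>param_space n \<gamma>. dualL n \<gamma> A F x \<le> dualL n \<gamma> A F y)"
  proof (intro ballI impI)
    fix x y assume x: "\<forall>y\<in>Wsub n \<gamma> A (meet_partition n \<gamma> Bs). dualL n \<gamma> A F x \<le> dualL n \<gamma> A F y"
      and y: "y \<in> param_space n \<gamma>"
    have "dualL n \<gamma> A F x \<le> dualL n \<gamma> A F (xbar y)" using x xbar_W[OF y] by blast
    also have "\<dots> \<le> dualL n \<gamma> A F y" by (rule dual_le)
    finally show "dualL n \<gamma> A F x \<le> dualL n \<gamma> A F y" .
  qed
  show ?thesis using dim_bound[OF A_nozero_row] inf min by blast
qed

end
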